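(* Assume (H). For any finite sequence of types ${\bf x}=(x_1,\dots,x_r)\in[K]^r$ and any non-negative measurable functions $G_1,G_2$, $$E^{\bf x}\Big[\sum_{v\in F}G_1(v,[F]_v)\,G_2(F_v)\Big]=\sum_{j=1}^rb_{x_j}\sum_{h\ge0}\widehat E^{{\bf x},j,h}\Big[\frac{G_1(V,F)\,E^{(e(V))}[G_2(T)]}{b_{e(V)}}\Big].$$
   Context: Let $K\ge1$ be an integer and $[K]=\{1,\dots,K\}$. ${\boldsymbol\zeta}=(\zeta^{(i)})$ is a family of probability measures on the set $\mathcal W_K$ of finite (possibly empty) $[K]$-valued sequences; $p({\bf w})\in\mathbb Z_+^K$ counts entries of each type and $\mu^{(i)}=p_*\zeta^{(i)}$. Set $m_{ij}=\sum z_j\mu^{(i)}(\{{\bf z}\})$, $M=(m_{ij})$ and $Q^{(i)}_{jk}=\partial^2\varphi^{(i)}/\partial s_j\partial s_k({\bf 1})$, with $\varphi^{(i)}({\bf s})=\sum\mu^{(i)}(\{{\bf z}\})\prod s_l^{z_l}$. Hypothesis (H) means all of the following: $M$ is irreducible; some $\mu^{(i)}$ charges $\{\sum z_l\ne1\}$; the spectral radius of $M$ is $1$; and all $Q^{(i)}_{jk}<\infty$. Then ${\bf b}$ is the right $1$-eigenvector of $M$ (positive entries) normalized by $\sum a_ib_i=1$, where ${\bf a}$ is the left $1$-eigenvector with $\sum a_i=1$. Trees and forests. Trees are finite subsets $t$ of the set $\mathcal U$ of finite words over $\mathbb N$ containing $\varnothing$, such that $ui\in t$ implies $u\in t$ and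 $uj\in t$ for $j\le i$, with types $e(\cdot)\in[K]$ and ${\bf w}_t(u)=(e(u1),\dots,e(uc_t(u)))$. A forest is $f=\bigcup_kk\,t_{(k)}$. For $u\in f$: - $f_u=\{v:uv\in f\}$ is the fringe subtree at $u$, with inherited types; - $[f]_u=\{u\}\cup(f\setminus uf_u)$ is the forest pruned at $u$, with restricted types. Galton–Watson laws. $P^{(i)}(T=t)=\prod_u\zeta^{(e(u))}({\bf w}_t(u))$ for root type $i$. $P^{\bf x}$ is the law of $F=\bigcup_{k=1}^rk\,T_k$ with independent $T_k\sim P^{(x_k)}$. $E^{(i)},E^{\bf x}$ denote the corresponding expectations. Size-biased tree. Let $\widehat\zeta^{(i)}({\bf w})=\frac{p({\bf w})\cdot{\bf b}}{b_i}\zeta^{(i)}({\bf w})$, a probability measure on $\mathcal W_K$. Build an infinite random $K$-type tree with a spine $V_0=\varnothing,V_1,V_2,\dots$, where $e(V_0)=i$: - a spine vertex $V_n$ of type $j$ has children types ${\bf w}$ drawn from $\widehat\zeta^{(j)}$; given ${\bf w}$, an index $l$ is chosen with probability $b_{w_l}/(p({\bf w})\cdot{\bf b})$, and $V_{n+1}=V_nl$; - every non-spine vertex of type $j$ has children types drawn from $\zeta^{(j)}$; - all choices are independent. $\widehat P^{(i),h}$ is the law of the pair $([\,\text{tree}\,]_{V_h},V_h)$, a finite tree with a distinguished vertex at height $h$. For ${\bf x}=(x_1,\dots,x_r)$, $1\le j\le r$ and $h\ge0$, $\widehat P^{{\bf x},j,h}$ is the law of the pointed forest $(F,V)$ where: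 - the components $F_l$, $l\ne j$, and $F_j$ are independent; - $F_l\sim P^{(x_l)}$ for $l\neq j$; - $(F_j,V')\sim\widehat P^{(x_j),h}$, and $V=jV'$. $\widehat E^{{\bf x},j,h}$ is the corresponding expectation, and $T$ denotes the identity map on trees. *)

theory Defs
  imports "HOL-Probability.Probability" "Jordan_Normal_Form.Spectral_Radius" "HOL-Library.Sublist"
begin

text \<open>Types are the integers 1..K. A word of U is a nat list with letters \<ge> 1.
  A typed tree / forest is a finite partial map from words to types
  (its domain is the set of vertices, its values the types e(u)).
  Offspring laws: zeta i is a pmf on finite type sequences (nat lists).\<close>

type_synonym ttree = "nat list \<rightharpoonup> nat"

definition mean_enn :: "(nat \<Rightarrow> nat list pmf) \<Rightarrow> nat \<Rightarrow> nat \<Rightarrow> ennreal" where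
  "mean_enn \<zeta> i j = (\<integral>\<^sup>+ w. of_nat (count_list w j) \<partial>measure_pmf (\<zeta> i))"

definition mentry :: "(nat \<Rightarrow> nat list pmf) \<Rightarrow> nat \<Rightarrow> nat \<Rightarrow> real" where
  "mentry \<zeta> i j = enn2real (mean_enn \<zeta> i j)"

text \<open>The mean matrix M = (m_ij), i,j in [K]; JNF matrices are 0-indexed.\<close>
definition Mmat :: "nat \<Rightarrow> (nat \<Rightarrow> nat list pmf) \<Rightarrow> real mat" where
  "Mmat K \<zeta> = mat K K (\<lambda>(i, j). mentry \<zeta> (i + 1) (j + 1))"

text \<open>Q^(i)_jk = second partial derivative of the generating function at 1
  = E[z_j (z_k - delta_jk)].\<close>
definition Qentry :: "(nat \<Rightarrow> nat list pmf) \<Rightarrow> nat \<Rightarrow> nat \<Rightarrow> nat \<Rightarrow> ennreal" where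
  "Qentry \<zeta> i j k = (\<integral>\<^sup>+ w. of_nat (count_list w j * (count_list w k - (if j = k then 1 else 0)))
                         \<partial>measure_pmf (\<zeta> i))"

definition irreducible_mat :: "nat \<Rightarrow> real mat \<Rightarrow> bool" where
  "irreducible_mat K A \<longleftrightarrow> (\<forall>i<K. \<forall>j<K. \<exists>n>0. (A ^\<^sub>m n) $$ (i, j) > 0)"

definition hypH :: "nat \<Rightarrow> (nat \<Rightarrow> nat list pmf) \<Rightarrow> bool" where
  "hypH K \<zeta> \<longleftrightarrow>
     irreducible_mat K (Mmat K \<zeta>)
   \<and> (\<exists>i\<in>{1..K}. measure_pmf.prob (\<zeta> i) {w. length w \<noteq> 1} > 0)
   \<and> spectral_radius (map_mat complex_of_real (Mmat K \<zeta>)) = 1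
   \<and> (\<forall>i\<in>{1..K}. \<forall>j\<in>{1..K}. \<forall>k\<in>{1..K}. Qentry \<zeta> i j k < \<infinity>)"

definition nchild :: "ttree \<Rightarrow> nat list \<Rightarrow> nat" where
  "nchild t u = card {i. u @ [i] \<in> dom t}"

definition childtypes :: "ttree \<Rightarrow> nat list \<Rightarrow> nat list" where
  "childtypes t u = map (\<lambda>i. the (t (u @ [i]))) [1..<Suc (nchild t u)]"

definition is_tree :: "nat \<Rightarrow> ttree \<Rightarrow> bool" where
  "is_tree K t \<longleftrightarrow> finite (dom t) \<and> [] \<in> dom t
     \<and> (\<forall>u i. u @ [i] \<in> dom t \<longrightarrow> u \<in> dom t \<and> 1 \<le> i \<and> (\<forall>j\<in>{1..i}. u @ [j] \<in> dom t))
     \<and> ran t \<subseteq> {1..K}"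

definition forest_of :: "ttree list \<Rightarrow> ttree" where
  "forest_of ts = (\<lambda>w. case w of [] \<Rightarrow> None
      | k # u \<Rightarrow> if 1 \<le> k \<and> k \<le> length ts then (ts ! (k - 1)) u else None)"

definition fringe :: "ttree \<Rightarrow> nat list \<Rightarrow> ttree" where
  "fringe f u = (\<lambda>v. f (u @ v))"

definition prune :: "ttree \<Rightarrow> nat list \<Rightarrow> ttree" where
  "prune f u = (\<lambda>w. if (\<exists>v. v \<noteq> [] \<and> w = u @ v) then None else f w)"

definition gw :: "nat \<Rightarrow> (nat \<Rightarrow> nat list pmf) \<Rightarrow> nat \<Rightarrow> ttree \<Rightarrow> real" where
  "gw K \<zeta> i t = (if is_tree K t \<and> t [] = Some i
      then (\<Prod>u\<in>dom t. pmf (\<zeta> (the (t u))) (childtypes t u)) else 0)"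

definition E_tree :: "nat \<Rightarrow> (nat \<Rightarrow> nat list pmf) \<Rightarrow> nat \<Rightarrow> (ttree \<Rightarrow> ennreal) \<Rightarrow> ennreal" where
  "E_tree K \<zeta> i G = (\<Sum>\<^sub>\<infinity> t\<in>UNIV. ennreal (gw K \<zeta> i t) * G t)"

definition E_forest :: "nat \<Rightarrow> (nat \<Rightarrow> nat list pmf) \<Rightarrow> nat list \<Rightarrow> (ttree \<Rightarrow> ennreal) \<Rightarrow> ennreal" where
  "E_forest K \<zeta> x G = (\<Sum>\<^sub>\<infinity> ts\<in>{ts. length ts = length x}.
      ennreal (\<Prod>l<length x. gw K \<zeta> (x ! l) (ts ! l)) * G (forest_of ts))"

definition zeta_hat :: "(nat \<Rightarrow> nat list pmf) \<Rightarrow> (nat \<Rightarrow> real) \<Rightarrow> nat \<Rightarrow> nat list \<Rightarrow> real" where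
  "zeta_hat \<zeta> b i w = sum_list (map b w) / b i * pmf (\<zeta> i) w"

text \<open>Law hat P^{(i),h} of ([tree]_{V_h}, V_h): the pruned tree consists of the spine
  vertices V_0..V_{h-1} (children drawn from hat zeta, next spine vertex V_n l chosen with
  probability b_{w_l}/(p(w).b)), the leaf V_h, and the non-spine vertices (children drawn
  from zeta), all choices independent.\<close>
definition sb_mass :: "nat \<Rightarrow> (nat \<Rightarrow> nat list pmf) \<Rightarrow> (nat \<Rightarrow> real) \<Rightarrow> nat \<Rightarrow> nat
    \<Rightarrow> ttree \<Rightarrow> nat list \<Rightarrow> real" where
  "sb_mass K \<zeta> b i h t v = (if is_tree K t \<and> t [] = Some i \<and> v \<in> dom t \<and> length v = h
        \<and> (\<forall>k. v @ [k] \<notin> dom t)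
      then (\<Prod>n<h. zeta_hat \<zeta> b (the (t (take n v))) (childtypes t (take n v))
                  * (b (the (t (take (Suc n) v))) / sum_list (map b (childtypes t (take n v)))))
         * (\<Prod>u\<in>{u\<in>dom t. \<not> prefix u v}. pmf (\<zeta> (the (t u))) (childtypes t u))
      else 0)"

text \<open>hat E^{x,j,h}[G(V,F)] for 1 \<le> j \<le> length x: component j is the size-biased
  pruned tree with distinguished vertex V', V = j V', other components independent GW.\<close>
definition E_hat :: "nat \<Rightarrow> (nat \<Rightarrow> nat list pmf) \<Rightarrow> (nat \<Rightarrow> real) \<Rightarrow> nat list \<Rightarrow> nat \<Rightarrow> nat
    \<Rightarrow> (nat list \<Rightarrow> ttree \<Rightarrow> ennreal) \<Rightarrow> ennreal" where
  "E_hat K \<zeta> b x j h G = (\<Sum>\<^sub>\<infinity> (ts, v')\<in>{ts. length ts = length x} \<times> UNIV.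
      ennreal ((\<Prod>l\<in>{..<length x} - {j - 1}. gw K \<zeta> (x ! l) (ts ! l))
               * sb_mass K \<zeta> b (x ! (j - 1)) h (ts ! (j - 1)) v')
      * G (j # v') (forest_of ts))"

end

theory Submission
  imports Defs
begin


definition graft :: "ttree \<Rightarrow> nat list \<Rightarrow> ttree \<Rightarrow> ttree" where
  "graft p v s = (\<lambda>w. if prefix v w then s (drop (length v) w) else p w)"

definition leafv :: "ttree \<Rightarrow> nat list \<Rightarrow> bool" where
  "leafv t v \<longleftrightarrow> (\<forall>k. v @ [k] \<notin> dom t)"

definition PP :: "(nat \<Rightarrow> nat list pmf) \<Rightarrow> ttree \<Rightarrow> nat list set \<Rightarrow> real" where
  "PP \<zeta> t A = (\<Prod>u\<in>A. pmf (\<zeta> (the (t u))) (childtypes t u))"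

lemma tree_prefix_closed:
  assumes "is_tree K t" "u @ z \<in> dom t" shows "u \<in> dom t"
  using assms(2)
proof (induction z rule: rev_induct)
  case Nil then show ?case by simp
next
  case (snoc a z)
  then have "(u @ z) @ [a] \<in> dom t" by simp
  then have "u @ z \<in> dom t" using assms(1) unfolding is_tree_def by blast
  then show ?case using snoc by blast
qed

lemma tree_prefix_closed':
  assumes "is_tree K t" "w \<in> dom t" "prefix u w" shows "u \<in> dom t"
  using assms tree_prefix_closed by (metis prefixE)

lemma tree_children:
  assumes "is_tree K t"
  shows "{i. u @ [i] \<in> dom t} = {1..nchild t u}"
proof -
  let ?S = "{i. u @ [i] \<in> dom t}"
  have fin: "finite ?S"
  proof -
    have "(\<lambda>i. u @ [i]) ` ?S \<subseteq> dom t" by auto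
    moreover have "finite (dom t)" using assms unfolding is_tree_def by blast
    ultimately have "finite ((\<lambda>i. u @ [i]) ` ?S)" by (rule finite_subset)
    moreover have "inj_on (\<lambda>i. u @ [i]) ?S" by (auto simp: inj_on_def)
    ultimately show ?thesis using finite_imageD by blast
  qed
  show ?thesis
  proof (cases "?S = {}")
    case True then show ?thesis by (simp add: nchild_def)
  next
    case False
    define m where "m = Max ?S"
    have mS: "m \<in> ?S" using Max_in[OF fin False] m_def by simp
    have "?S = {1..m}"
    proof
      show "?S \<subseteq> {1..m}"
      proof
        fix i assume "i \<in> ?S"
        then have "1 \<le> i" using assms unfolding is_tree_def by blast
        moreover have "i \<le> m" using \<open>i \<in> ?S\<close> fin m_def by simp
        ultimately show "i \<in> {1..m}" by simp
      qed
      show "{1..m} \<subseteq> ?S" using mS assms unfolding is_tree_def by blast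
    qed
    then show ?thesis by (simp add: nchild_def)
  qed
qed

lemma childtypes_cong:
  assumes "\<And>i. t1 (u @ [i]) = t2 (w @ [i])"
  shows "childtypes t1 u = childtypes t2 w"
proof -
  have "nchild t1 u = nchild t2 w" unfolding nchild_def using assms by (simp add: domIff)
  then show ?thesis unfolding childtypes_def using assms by simp
qed

lemma childtypes_set:
  assumes "is_tree K t"
  shows "set (childtypes t u) = (\<lambda>i. the (t (u @ [i]))) ` {i. u @ [i] \<in> dom t}"
proof -
  have "set (childtypes t u) = (\<lambda>i. the (t (u @ [i]))) ` {1..<Suc (nchild t u)}"
    unfolding childtypes_def set_map set_upt ..
  also have "{1..<Suc (nchild t u)} = {i. u @ [i] \<in> dom t}"
    using tree_children[OF assms, of u] atLeastLessThanSuc_atLeastAtMost by simp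
  finally show ?thesis .
qed

lemma childtypes_range:
  assumes "is_tree K t"
  shows "set (childtypes t u) \<subseteq> {1..K}"
proof
  fix y assume "y \<in> set (childtypes t u)"
  then obtain i where i: "u @ [i] \<in> dom t" "y = the (t (u @ [i]))"
    using childtypes_set[OF assms] by auto
  then have "y \<in> ran t" by (auto simp: ran_def)
  then show "y \<in> {1..K}" using assms unfolding is_tree_def by blast
qed

lemma type_range:
  assumes "is_tree K t" "u \<in> dom t" shows "the (t u) \<in> {1..K}"
proof -
  have "the (t u) \<in> ran t" using assms(2) by (auto simp: ran_def)
  then show ?thesis using assms unfolding is_tree_def by blast
qed

lemma prune_tree:
  assumes "is_tree K t" "u \<in> dom t"
  shows "is_tree K (prune t u)" "u \<in> dom (prune t u)" "leafv (prune t u) u"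
    "prune t u [] = t []" "prune t u u = t u"
proof -
  have dom: "dom (prune t u) = {w \<in> dom t. \<not> (\<exists>v. v \<noteq> [] \<and> w = u @ v)}"
    by (auto simp: prune_def split: if_splits)
  have step: "w \<in> dom (prune t u) \<and> 1 \<le> i \<and> (\<forall>j\<in>{1..i}. w @ [j] \<in> dom (prune t u))"
    if a: "w @ [i] \<in> dom (prune t u)" for w i
  proof -
    from a have wi: "w @ [i] \<in> dom t" "\<not> (\<exists>v. v \<noteq> [] \<and> w @ [i] = u @ v)" unfolding dom by auto
    have "\<not> (\<exists>v. v \<noteq> [] \<and> w = u @ v)"
    proof
      assume "\<exists>v. v \<noteq> [] \<and> w = u @ v"
      then obtain v where "v \<noteq> []" "w = u @ v" by blast
      then have "v @ [i] \<noteq> [] \<and> w @ [i] = u @ (v @ [i])" by simp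
      with wi(2) show False by blast
    qed
    moreover have "\<not> (\<exists>v. v \<noteq> [] \<and> w @ [j] = u @ v)" for j
    proof
      assume "\<exists>v. v \<noteq> [] \<and> w @ [j] = u @ v"
      then obtain v where v: "v \<noteq> []" "w @ [j] = u @ v" by blast
      then obtain v' a where "v = v' @ [a]" by (metis rev_exhaust)
      with v have "w = u @ v'" "j = a" by auto
      show False
      proof (cases "v' = []")
        case True then have "[i] \<noteq> [] \<and> w @ [i] = u @ [i]" using \<open>w = u @ v'\<close> by simp
        then show False using wi(2) by blast
      next
        case False then show False using \<open>\<not> (\<exists>v. v \<noteq> [] \<and> w = u @ v)\<close> \<open>w = u @ v'\<close> by blast
      qed
    qed
    ultimately show "w \<in> dom (prune t u) \<and> 1 \<le> i \<and> (\<forall>j\<in>{1..i}. w @ [j] \<in> dom (prune t u))"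
      using assms(1) wi(1) unfolding dom is_tree_def by blast
  qed
  have "ran (prune t u) \<subseteq> ran t" by (auto simp: ran_def prune_def split: if_splits)
  moreover have "finite (dom (prune t u))" using assms unfolding dom is_tree_def by auto
  moreover have "[] \<in> dom (prune t u)" using assms unfolding dom is_tree_def by auto
  ultimately show "is_tree K (prune t u)" using assms step unfolding is_tree_def by blast
  show "u \<in> dom (prune t u)" using assms unfolding dom by auto
  show "leafv (prune t u) u" unfolding leafv_def dom by auto
  show "prune t u [] = t []" "prune t u u = t u" by (auto simp: prune_def)
qed

lemma fringe_tree:
  assumes "is_tree K t" "u \<in> dom t"
  shows "is_tree K (fringe t u)" "fringe t u [] = t u"
proof -
  have dom: "dom (fringe t u) = {v. u @ v \<in> dom t}" by (auto simp: fringe_def)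
  have "(\<lambda>v. u @ v) ` dom (fringe t u) \<subseteq> dom t" unfolding dom by auto
  then have "finite ((\<lambda>v. u @ v) ` dom (fringe t u))"
    using assms(1) unfolding is_tree_def by (meson finite_subset)
  then have fin: "finite (dom (fringe t u))" by (rule finite_imageD) (auto simp: inj_on_def)
  have ran: "ran (fringe t u) \<subseteq> ran t" by (auto simp: ran_def fringe_def)
  have step: "w \<in> dom (fringe t u) \<and> 1 \<le> i \<and> (\<forall>j\<in>{1..i}. w @ [j] \<in> dom (fringe t u))"
    if "w @ [i] \<in> dom (fringe t u)" for w i
  proof -
    have "(u @ w) @ [i] \<in> dom t" using that unfolding dom by simp
    then have "u @ w \<in> dom t \<and> 1 \<le> i \<and> (\<forall>j\<in>{1..i}. (u @ w) @ [j] \<in> dom t)"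
      using assms(1) unfolding is_tree_def by blast
    then show ?thesis unfolding dom by simp
  qed
  have ranK: "ran (fringe t u) \<subseteq> {1..K}" using ran assms(1) unfolding is_tree_def by blast
  have nil: "[] \<in> dom (fringe t u)" using assms(2) unfolding dom by simp
  have all: "\<forall>w i. w @ [i] \<in> dom (fringe t u) \<longrightarrow> w \<in> dom (fringe t u) \<and> 1 \<le> i \<and> (\<forall>j\<in>{1..i}. w @ [j] \<in> dom (fringe t u))"
    using step by blast
  show "is_tree K (fringe t u)" unfolding is_tree_def
    by (rule conjI[OF fin conjI[OF nil conjI[OF all ranK]]])
  show "fringe t u [] = t u" by (simp add: fringe_def)
qed

lemma leaf_ext:
  assumes "is_tree K p" "leafv p v" "z \<noteq> []"
  shows "v @ z \<notin> dom p"
proof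
  assume a: "v @ z \<in> dom p"
  obtain c z' where "z = c # z'" using assms(3) by (cases z) auto
  then have "(v @ [c]) @ z' \<in> dom p" using a by simp
  then have "v @ [c] \<in> dom p" using tree_prefix_closed[OF assms(1)] by blast
  then show False using assms(2) unfolding leafv_def by blast
qed

lemma graft_pref[simp]: "graft p v s (v @ z) = s z"
  by (simp add: graft_def)

lemma graft_notpref: "\<not> prefix v w \<Longrightarrow> graft p v s w = p w"
  by (simp add: graft_def)

lemma fringe_graft: "fringe (graft p v s) v = s"
  by (simp add: fringe_def)

lemma graft_prune_fringe: "graft (prune t u) u (fringe t u) = t"
proof
  fix w show "graft (prune t u) u (fringe t u) w = t w"
  proof (cases "prefix u w")
    case True
    then obtain z where "w = u @ z" by (auto simp: prefix_def)
    then show ?thesis by (simp add: fringe_def)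
  next
    case False
    then have "\<not> (\<exists>v. v \<noteq> [] \<and> w = u @ v)" by (auto simp: prefix_def)
    then have "prune t u w = t w" unfolding prune_def by auto
    then show ?thesis using False by (simp add: graft_notpref)
  qed
qed

locale graftctx =
  fixes K :: nat and p s :: ttree and v :: "nat list"
  assumes tp: "is_tree K p" and vp: "v \<in> dom p" and lf: "leafv p v"
    and ts: "is_tree K s" and root: "s [] = p v"
begin

lemma notin: "z \<noteq> [] \<Longrightarrow> v @ z \<notin> dom p"
  using leaf_ext[OF tp lf] .

lemma sdom: "[] \<in> dom s" using ts unfolding is_tree_def by blast

lemma pref_in: "w \<in> dom p \<Longrightarrow> prefix v w \<Longrightarrow> w = v"
  using notin by (metis append.right_neutral prefix_def)

lemma dom_graft: "dom (graft p v s) = (dom p - {v}) \<union> (\<lambda>z. v @ z) ` dom s"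
proof (intro equalityI subsetI)
  fix w assume w: "w \<in> dom (graft p v s)"
  show "w \<in> (dom p - {v}) \<union> (\<lambda>z. v @ z) ` dom s"
  proof (cases "prefix v w")
    case True
    then obtain z where z: "w = v @ z" by (auto simp: prefix_def)
    then have "z \<in> dom s" using w by auto
    then show ?thesis using z by auto
  next
    case False
    then have "w \<in> dom p" "w \<noteq> v" using w by (auto simp: graft_notpref)
    then show ?thesis by auto
  qed
next
  fix w assume "w \<in> (dom p - {v}) \<union> (\<lambda>z. v @ z) ` dom s"
  then show "w \<in> dom (graft p v s)"
  proof
    assume w: "w \<in> dom p - {v}"
    then have "\<not> prefix v w" using pref_in by blast
    then show ?thesis using w by (auto simp: graft_notpref)
  next
    assume "w \<in> (\<lambda>z. v @ z) ` dom s"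
    then show ?thesis by auto
  qed
qed

lemma disj: "(dom p - {v}) \<inter> (\<lambda>z. v @ z) ` dom s = {}"
  using notin by auto

lemma graft_root: "graft p v s [] = p []"
  using root by (cases "v = []") (auto simp: graft_def)

lemma graft_tree: "is_tree K (graft p v s)"
proof -
  have fin: "finite (dom (graft p v s))"
    using tp ts unfolding dom_graft is_tree_def by auto
  have "[] \<in> dom (graft p v s)" using graft_root tp unfolding is_tree_def by auto
  have ran: "ran (graft p v s) \<subseteq> ran p \<union> ran s"
    by (auto simp: ran_def graft_def split: if_splits)
  have vin: "v \<in> dom (graft p v s)" using sdom unfolding dom_graft by auto
  have pin: "y \<in> dom (graft p v s)" if "y \<in> dom p" for y
    using that vin unfolding dom_graft by auto
  have step: "w \<in> dom (graft p v s) \<and> 1 \<le> i \<and> (\<forall>j\<in>{1..i}. w @ [j] \<in> dom (graft p v s))"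
    if a: "w @ [i] \<in> dom (graft p v s)" for w i
  proof -
    from a have "w @ [i] \<in> dom p - {v} \<or> (\<exists>z\<in>dom s. w @ [i] = v @ z)"
      unfolding dom_graft by blast
    then show ?thesis
    proof
      assume "w @ [i] \<in> dom p - {v}"
      then have "w \<in> dom p \<and> 1 \<le> i \<and> (\<forall>j\<in>{1..i}. w @ [j] \<in> dom p)"
        using tp unfolding is_tree_def by blast
      then show ?thesis using pin by blast
    next
      assume "\<exists>z\<in>dom s. w @ [i] = v @ z"
      then obtain z where z: "z \<in> dom s" "w @ [i] = v @ z" by blast
      show ?thesis
      proof (cases "z = []")
        case True
        then have "w @ [i] \<in> dom p" using z vp by simp
        then have "w \<in> dom p \<and> 1 \<le> i \<and> (\<forall>j\<in>{1..i}. w @ [j] \<in> dom p)"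
          using tp unfolding is_tree_def by blast
        then show ?thesis using pin by blast
      next
        case False
        then obtain z' a where za: "z = z' @ [a]" by (metis rev_exhaust)
        with z have wz: "w = v @ z'" "i = a" by auto
        have "z' @ [a] \<in> dom s" using z za by simp
        then have "z' \<in> dom s \<and> 1 \<le> a \<and> (\<forall>j\<in>{1..a}. z' @ [j] \<in> dom s)"
          using ts unfolding is_tree_def by blast
        moreover have sin: "v @ y \<in> dom (graft p v s)" if "y \<in> dom s" for y
          using that by (simp add: domIff)
        ultimately show ?thesis unfolding wz
          by (metis append.assoc)
      qed
    qed
  qed
  have ranK: "ran (graft p v s) \<subseteq> {1..K}" using ran tp ts unfolding is_tree_def by blast
  have all: "\<forall>w i. w @ [i] \<in> dom (graft p v s) \<longrightarrow> w \<in> dom (graft p v s) \<and> 1 \<le> i \<and> (\<forall>j\<in>{1..i}. w @ [j] \<in> dom (graft p v s))"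
    using step by blast
  show ?thesis unfolding is_tree_def
    by (rule conjI[OF fin conjI[OF \<open>[] \<in> dom (graft p v s)\<close> conjI[OF all ranK]]])
qed

lemma prune_graft: "prune (graft p v s) v = p"
proof
  fix w show "prune (graft p v s) v w = p w"
  proof (cases "\<exists>z. z \<noteq> [] \<and> w = v @ z")
    case True
    then obtain z where "z \<noteq> []" "w = v @ z" by blast
    then show ?thesis using notin[of z] by (auto simp: prune_def domIff)
  next
    case False
    show ?thesis
    proof (cases "prefix v w")
      case True
      then obtain z where "w = v @ z" by (auto simp: prefix_def)
      then have "w = v" using False by auto
      moreover have "graft p v s v = s []" using graft_pref[of p v s "[]"] by simp
      ultimately show ?thesis using False root by (simp add: prune_def)
    next
      case False2: False
      have "prune (graft p v s) v w = graft p v s w" unfolding prune_def using False by auto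
      then show ?thesis using False2 by (simp add: graft_notpref)
    qed
  qed
qed

lemma PP_graft:
  "PP \<zeta> (graft p v s) (dom (graft p v s)) = PP \<zeta> p (dom p - {v}) * PP \<zeta> s (dom s)"
proof -
  have finp: "finite (dom p - {v})" using tp unfolding is_tree_def by auto
  have fins: "finite ((\<lambda>z. v @ z) ` dom s)" using ts unfolding is_tree_def by auto
  have "PP \<zeta> (graft p v s) (dom (graft p v s))
      = PP \<zeta> (graft p v s) (dom p - {v}) * PP \<zeta> (graft p v s) ((\<lambda>z. v @ z) ` dom s)"
    unfolding PP_def dom_graft by (rule prod.union_disjoint[OF finp fins disj])
  also have "PP \<zeta> (graft p v s) (dom p - {v}) = PP \<zeta> p (dom p - {v})"
    unfolding PP_def
  proof (rule prod.cong[OF refl])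
    fix w assume w: "w \<in> dom p - {v}"
    then have np: "\<not> prefix v w" using pref_in by blast
    have "graft p v s (w @ [i]) = p (w @ [i])" for i
    proof (cases "prefix v (w @ [i])")
      case True
      then have "v = w @ [i]" using np by (simp add: prefix_snoc)
      then show ?thesis using root by (metis append_Nil2 graft_pref)
    next
      case False then show ?thesis by (simp add: graft_notpref)
    qed
    then have "childtypes (graft p v s) w = childtypes p w" by (rule childtypes_cong)
    then show "pmf (\<zeta> (the (graft p v s w))) (childtypes (graft p v s) w)
             = pmf (\<zeta> (the (p w))) (childtypes p w)" using np by (simp add: graft_notpref)
  qed
  also have "PP \<zeta> (graft p v s) ((\<lambda>z. v @ z) ` dom s) = PP \<zeta> s (dom s)"
    unfolding PP_def
  proof (subst prod.reindex)
    show "inj_on ((@) v) (dom s)" by (auto simp: inj_on_def)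
    have "childtypes (graft p v s) (v @ z) = childtypes s z" for z
      by (rule childtypes_cong) simp
    then show "(\<Prod>z\<in>dom s. ((\<lambda>u. pmf (\<zeta> (the (graft p v s u))) (childtypes (graft p v s) u)) \<circ> (@) v) z)
       = (\<Prod>u\<in>dom s. pmf (\<zeta> (the (s u))) (childtypes s u))" by simp
  qed
  finally show ?thesis .
qed

end




lemma sum_list_ge_member:
  fixes f :: "'a \<Rightarrow> real"
  shows "(\<And>y. y \<in> set xs \<Longrightarrow> 0 \<le> f y) \<Longrightarrow> x \<in> set xs \<Longrightarrow> f x \<le> sum_list (map f xs)"
proof (induction xs)
  case Nil then show ?case by simp
next
  case (Cons a xs)
  have nn: "0 \<le> sum_list (map f xs)" by (rule sum_list_nonneg) (use Cons.prems(1) in auto)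
  show ?case
  proof (cases "x = a")
    case True then show ?thesis using nn by simp
  next
    case False
    then have "f x \<le> sum_list (map f xs)" using Cons by simp
    moreover have "0 \<le> f a" using Cons.prems(1) by simp
    ultimately show ?thesis by simp
  qed
qed

lemma PP_nonneg: "0 \<le> PP \<zeta> t A"
  by (simp add: PP_def prod_nonneg)

lemma gw_nonneg: "0 \<le> gw K \<zeta> i t"
  by (simp add: gw_def prod_nonneg)

lemma gw_zero: "\<not> (is_tree K t \<and> t [] = Some i) \<Longrightarrow> gw K \<zeta> i t = 0"
  unfolding gw_def by (rule if_not_P)

lemma gw_eq: "is_tree K t \<Longrightarrow> t [] = Some i \<Longrightarrow> gw K \<zeta> i t = PP \<zeta> t (dom t)"
  by (simp add: gw_def PP_def)

lemma sb_zero: "\<not> (is_tree K t \<and> t [] = Some i \<and> v \<in> dom t \<and> length v = h \<and> leafv t v)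
   \<Longrightarrow> sb_mass K \<zeta> b i h t v = 0"
  unfolding sb_mass_def leafv_def by (rule if_not_P)

lemma sb_formula:
  assumes tp: "is_tree K p" and rt: "p [] = Some i" and vp: "v \<in> dom p" and lf: "leafv p v"
    and bpos: "\<forall>k\<in>{1..K}. b k > 0"
  shows "sb_mass K \<zeta> b i (length v) p v = b (the (p v)) / b i * PP \<zeta> p (dom p - {v})"
proof -
  define ty where "ty u = the (p u)" for u
  define pm where "pm u = pmf (\<zeta> (ty u)) (childtypes p u)" for u
  define f where "f k = zeta_hat \<zeta> b (ty (take k v)) (childtypes p (take k v))
     * (b (ty (take (Suc k) v)) / sum_list (map b (childtypes p (take k v))))" for k
  have dom_take: "take k v \<in> dom p" for k using tree_prefix_closed'[OF tp vp] take_is_prefix by blast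
  have bty: "b (ty u) > 0" if "u \<in> dom p" for u using type_range[OF tp that] bpos ty_def by auto
  have bi: "ty [] = i" using rt ty_def by simp
  have tel: "n \<le> length v \<Longrightarrow> (\<Prod>k<n. f k) = b (ty (take n v)) / b i * (\<Prod>k<n. pm (take k v))" for n
  proof (induction n)
    case 0
    have "[] \<in> dom p" using tp unfolding is_tree_def by blast
    then have "b i > 0" using bty[of "[]"] bi by simp
    then show ?case using bi by simp
  next
    case (Suc n)
    then have nl: "n < length v" by simp
    let ?u = "take n v"
    let ?u' = "take (Suc n) v"
    have u': "?u' = ?u @ [v ! n]" using nl by (simp add: take_Suc_conv_app_nth)
    have "?u @ [v!n] \<in> dom p" using dom_take[of "Suc n"] u' by simp
    then have mem: "ty ?u' \<in> set (childtypes p ?u)" using childtypes_set[OF tp, of ?u] u' ty_def by auto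
    have nonneg: "0 \<le> b y" if "y \<in> set (childtypes p ?u)" for y
      using childtypes_range[OF tp, of ?u] that bpos by fastforce
    have S: "b (ty ?u') \<le> sum_list (map b (childtypes p ?u))" by (rule sum_list_ge_member[OF nonneg mem])
    have bu': "b (ty ?u') > 0" using bty dom_take by blast
    have bu: "b (ty ?u) > 0" using bty dom_take by blast
    have Spos: "sum_list (map b (childtypes p ?u)) > 0" using S bu' by linarith
    have fn: "f n = b (ty ?u') / b (ty ?u) * pm ?u"
      unfolding f_def zeta_hat_def pm_def using Spos bu by (simp add: field_simps)
    have "(\<Prod>k<Suc n. f k) = (\<Prod>k<n. f k) * f n" by simp
    also have "\<dots> = b (ty ?u) / b i * (\<Prod>k<n. pm (take k v)) * (b (ty ?u') / b (ty ?u) * pm ?u)"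
      using Suc.IH nl fn by simp
    also have "\<dots> = b (ty ?u') / b i * ((\<Prod>k<n. pm (take k v)) * pm ?u)" using bu by (simp add: field_simps)
    also have "\<dots> = b (ty ?u') / b i * (\<Prod>k<Suc n. pm (take k v))" by simp
    finally show ?case .
  qed
  have sets: "dom p - {v} = (\<lambda>k. take k v) ` {..<length v} \<union> {u \<in> dom p. \<not> prefix u v}"
  proof (intro equalityI subsetI)
    fix u assume u: "u \<in> dom p - {v}"
    show "u \<in> (\<lambda>k. take k v) ` {..<length v} \<union> {u \<in> dom p. \<not> prefix u v}"
    proof (cases "prefix u v")
      case True
      then obtain z where z: "v = u @ z" by (auto simp: prefix_def)
      then have "u = take (length u) v" by simp
      moreover have "z \<noteq> []" using z u by auto
      then have "length u < length v" using z by simp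
      ultimately show ?thesis by blast
    next
      case False then show ?thesis using u by blast
    qed
  next
    fix u assume "u \<in> (\<lambda>k. take k v) ` {..<length v} \<union> {u \<in> dom p. \<not> prefix u v}"
    then show "u \<in> dom p - {v}"
    proof
      assume "u \<in> (\<lambda>k. take k v) ` {..<length v}"
      then obtain k where "k < length v" "u = take k v" by auto
      then show ?thesis using dom_take by auto
    next
      assume "u \<in> {u \<in> dom p. \<not> prefix u v}"
      then show ?thesis by auto
    qed
  qed
  have disj: "(\<lambda>k. take k v) ` {..<length v} \<inter> {u \<in> dom p. \<not> prefix u v} = {}"
    using take_is_prefix by blast
  have inj: "inj_on (\<lambda>k. take k v) {..<length v}"
  proof (rule inj_onI)
    fix k k' assume "k \<in> {..<length v}" "k' \<in> {..<length v}" "take k v = take k' v"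
    then have "length (take k v) = length (take k' v)" by simp
    then show "k = k'" using \<open>k \<in> {..<length v}\<close> \<open>k' \<in> {..<length v}\<close> by simp
  qed
  have fin2: "finite {u \<in> dom p. \<not> prefix u v}" using tp unfolding is_tree_def by auto
  have PPsplit: "PP \<zeta> p (dom p - {v}) = (\<Prod>k<length v. pm (take k v)) * PP \<zeta> p {u \<in> dom p. \<not> prefix u v}"
  proof -
    have "PP \<zeta> p (dom p - {v}) = PP \<zeta> p ((\<lambda>k. take k v) ` {..<length v}) * PP \<zeta> p {u \<in> dom p. \<not> prefix u v}"
      unfolding sets PP_def by (rule prod.union_disjoint[OF _ fin2 disj]) simp
    also have "PP \<zeta> p ((\<lambda>k. take k v) ` {..<length v}) = (\<Prod>k<length v. pm (take k v))"
      unfolding PP_def pm_def ty_def by (simp add: prod.reindex[OF inj])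
    finally show ?thesis .
  qed
  have "sb_mass K \<zeta> b i (length v) p v = (\<Prod>k<length v. f k) * PP \<zeta> p {u \<in> dom p. \<not> prefix u v}"
    unfolding sb_mass_def f_def ty_def PP_def using tp rt vp lf unfolding leafv_def by simp
  also have "\<dots> = b (ty v) / b i * (\<Prod>k<length v. pm (take k v)) * PP \<zeta> p {u \<in> dom p. \<not> prefix u v}"
    using tel[of "length v"] by simp
  also have "\<dots> = b (the (p v)) / b i * PP \<zeta> p (dom p - {v})"
    using PPsplit ty_def by simp
  finally show ?thesis .
qed

lemma forest_Cons: "forest_of ts (k # u) = (if 1 \<le> k \<and> k \<le> length ts then (ts ! (k - 1)) u else None)"
  by (simp add: forest_of_def)

lemma forest_prune:
  assumes "1 \<le> j" "j \<le> length ts"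
  shows "prune (forest_of ts) (j # u) = forest_of (ts[j - 1 := prune (ts ! (j - 1)) u])"
proof
  fix w show "prune (forest_of ts) (j # u) w = forest_of (ts[j - 1 := prune (ts ! (j - 1)) u]) w"
  proof (cases w)
    case Nil then show ?thesis by (simp add: prune_def forest_of_def)
  next
    case (Cons k w')
    show ?thesis
    proof (cases "k = j")
      case True
      have "prune (forest_of ts) (j # u) (j # w') = prune (ts ! (j - 1)) u w'"
        using assms by (auto simp: prune_def forest_of_def)
      then show ?thesis using Cons True assms by (auto simp: forest_of_def)
    next
      case False
      have "prune (forest_of ts) (j # u) (k # w') = forest_of ts (k # w')"
        using False by (simp add: prune_def)
      moreover have "k \<ge> 1 \<Longrightarrow> k - 1 \<noteq> j - 1" using False assms by auto
      ultimately show ?thesis using Cons by (auto simp: forest_of_def)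
    qed
  qed
qed

lemma forest_fringe:
  assumes "1 \<le> j" "j \<le> length ts"
  shows "fringe (forest_of ts) (j # u) = fringe (ts ! (j - 1)) u"
  using assms by (simp add: fringe_def forest_of_def)

lemma forest_dom:
  "dom (forest_of ts) = (\<lambda>(j, u). j # u) ` Sigma {1..length ts} (\<lambda>j. dom (ts ! (j - 1)))"
proof (intro equalityI subsetI)
  fix w assume w: "w \<in> dom (forest_of ts)"
  show "w \<in> (\<lambda>(j, u). j # u) ` Sigma {1..length ts} (\<lambda>j. dom (ts ! (j - 1)))"
  proof (cases w)
    case Nil then show ?thesis using w by (simp add: forest_of_def domIff)
  next
    case (Cons k u)
    then have "forest_of ts (k # u) \<noteq> None" using w by auto
    then have "1 \<le> k \<and> k \<le> length ts \<and> u \<in> dom (ts ! (k - 1))"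
      unfolding forest_Cons by (auto split: if_splits)
    then show ?thesis using Cons by (intro image_eqI[of _ _ "(k, u)"]) auto
  qed
next
  fix w assume "w \<in> (\<lambda>(j, u). j # u) ` Sigma {1..length ts} (\<lambda>j. dom (ts ! (j - 1)))"
  then obtain z where z: "z \<in> Sigma {1..length ts} (\<lambda>j. dom (ts ! (j - 1)))" "w = (\<lambda>(j, u). j # u) z"
    by (rule imageE)
  obtain k u where zk: "z = (k, u)" by (cases z)
  have "w = k # u" "k \<in> {1..length ts}" "u \<in> dom (ts ! (k - 1))" using z unfolding zk by simp_all
  then show "w \<in> dom (forest_of ts)" by (auto simp: forest_Cons domIff)
qed



lemma enn_summable[simp]: "(f :: _ \<Rightarrow> ennreal) summable_on S"
  by (rule nonneg_summable_on_complete) simp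

lemma enn_infsum_SUP:
  fixes f :: "_ \<Rightarrow> ennreal"
  shows "infsum f A = (SUP F\<in>{F. finite F \<and> F \<subseteq> A}. sum f F)"
  by (rule nonneg_infsum_complete) simp

lemma enn_mono_set:
  fixes f :: "_ \<Rightarrow> ennreal"
  assumes "S \<subseteq> T" shows "infsum f S \<le> infsum f T"
  unfolding enn_infsum_SUP by (rule SUP_subset_mono) (use assms in auto)

lemma enn_Sigma_fin:
  fixes f :: "_ \<Rightarrow> ennreal"
  assumes "finite G"
  shows "infsum f (Sigma G B) = (\<Sum>x\<in>G. infsum (\<lambda>y. f (x,y)) (B x))"
  using assms
proof (induction G rule: finite_induct)
  case empty then show ?case by simp
next
  case (insert a G)
  have eq: "Sigma (insert a G) B = Pair a ` B a \<union> Sigma G B" by auto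
  have disj: "Pair a ` B a \<inter> Sigma G B = {}" using insert.hyps(2) by auto
  have "infsum f (Sigma (insert a G) B) = infsum f (Pair a ` B a) + infsum f (Sigma G B)"
    unfolding eq by (rule infsum_Un_disjoint[OF _ _ disj]) simp_all
  also have "infsum f (Pair a ` B a) = infsum (\<lambda>y. f (a, y)) (B a)"
    by (subst infsum_reindex) (auto simp: inj_on_def o_def)
  finally show ?case using insert by simp
qed

lemma enn_Sigma:
  fixes f :: "_ \<Rightarrow> ennreal"
  shows "infsum f (Sigma A B) = infsum (\<lambda>x. infsum (\<lambda>y. f (x,y)) (B x)) A"
proof (rule antisym)
  show "infsum f (Sigma A B) \<le> infsum (\<lambda>x. infsum (\<lambda>y. f (x,y)) (B x)) A"
    unfolding enn_infsum_SUP[of f]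
  proof (rule SUP_least)
    fix F assume F: "F \<in> {F. finite F \<and> F \<subseteq> Sigma A B}"
    define G where "G = fst ` F"
    have finG: "finite G" using F G_def by auto
    have GA: "G \<subseteq> A" using F G_def by auto
    have "sum f F = infsum f F" using F by simp
    also have "\<dots> \<le> infsum f (Sigma G B)" using F G_def by (intro enn_mono_set) force
    also have "\<dots> = (\<Sum>x\<in>G. infsum (\<lambda>y. f (x,y)) (B x))" by (rule enn_Sigma_fin[OF finG])
    also have "\<dots> = infsum (\<lambda>x. infsum (\<lambda>y. f (x,y)) (B x)) G" using finG by simp
    also have "\<dots> \<le> infsum (\<lambda>x. infsum (\<lambda>y. f (x,y)) (B x)) A" by (rule enn_mono_set[OF GA])
    finally show "sum f F \<le> infsum (\<lambda>x. infsum (\<lambda>y. f (x,y)) (B x)) A" .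
  qed
next
  show "infsum (\<lambda>x. infsum (\<lambda>y. f (x,y)) (B x)) A \<le> infsum f (Sigma A B)"
    unfolding enn_infsum_SUP[of "\<lambda>x. infsum (\<lambda>y. f (x,y)) (B x)"]
  proof (rule SUP_least)
    fix G assume G: "G \<in> {F. finite F \<and> F \<subseteq> A}"
    have "sum (\<lambda>x. infsum (\<lambda>y. f (x,y)) (B x)) G = infsum f (Sigma G B)"
      using G by (simp add: enn_Sigma_fin)
    also have "\<dots> \<le> infsum f (Sigma A B)" using G by (intro enn_mono_set) auto
    finally show "sum (\<lambda>x. infsum (\<lambda>y. f (x,y)) (B x)) G \<le> infsum f (Sigma A B)" .
  qed
qed

lemma enn_cmult:
  fixes f :: "_ \<Rightarrow> ennreal"
  shows "c * infsum f A = infsum (\<lambda>x. c * f x) A"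
  by (simp add: nonneg_infsum_complete SUP_mult_left_ennreal sum_distrib_left)

lemma enn_suminf:
  fixes f :: "nat \<Rightarrow> ennreal"
  shows "suminf f = infsum f UNIV"
proof -
  have "(f has_sum infsum f UNIV) UNIV" using has_sum_infsum enn_summable by blast
  then have "f sums infsum f UNIV" by (rule has_sum_imp_sums)
  then show ?thesis by (simp add: sums_iff)
qed

lemma enn_swap:
  fixes f :: "_ \<Rightarrow> _ \<Rightarrow> ennreal"
  shows "infsum (\<lambda>x. infsum (\<lambda>y. f x y) B) A = infsum (\<lambda>y. infsum (\<lambda>x. f x y) A) B"
proof -
  have bij: "bij_betw prod.swap (B \<times> A) (A \<times> B)" by (rule bij_betwI[of _ _ _ prod.swap]) auto
  have "infsum (\<lambda>x. infsum (\<lambda>y. f x y) B) A = infsum (\<lambda>(x,y). f x y) (A \<times> B)"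
    using enn_Sigma[of "\<lambda>(x,y). f x y" A "\<lambda>_. B"] by simp
  also have "\<dots> = infsum (\<lambda>z. (\<lambda>(x,y). f x y) (prod.swap z)) (B \<times> A)"
    using infsum_reindex_bij_betw[OF bij, of "\<lambda>(x,y). f x y"] by simp
  also have "\<dots> = infsum (\<lambda>(y,x). f x y) (B \<times> A)" by (simp add: case_prod_unfold)
  also have "\<dots> = infsum (\<lambda>y. infsum (\<lambda>x. f x y) A) B"
    using enn_Sigma[of "\<lambda>(y,x). f x y" B "\<lambda>_. A"] by simp
  finally show ?thesis .
qed

lemma enn_infsum_sum:
  fixes f :: "_ \<Rightarrow> _ \<Rightarrow> ennreal"
  assumes "finite I"
  shows "infsum (\<lambda>x. \<Sum>i\<in>I. f i x) A = (\<Sum>i\<in>I. infsum (f i) A)"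
  using assms
proof (induction I rule: finite_induct)
  case empty then show ?case by simp
next
  case (insert i I)
  have "infsum (\<lambda>x. \<Sum>i\<in>insert i I. f i x) A = infsum (\<lambda>x. f i x + (\<Sum>i\<in>I. f i x)) A"
    using insert by simp
  also have "\<dots> = infsum (f i) A + infsum (\<lambda>x. \<Sum>i\<in>I. f i x) A"
    by (rule infsum_add) simp_all
  finally show ?case using insert by simp
qed

lemma enn_single:
  fixes f :: "_ \<Rightarrow> ennreal"
  assumes "\<And>h. h \<noteq> k \<Longrightarrow> f h = 0"
  shows "infsum f UNIV = f k"
proof -
  have "infsum f UNIV = infsum f {k}" by (rule infsum_cong_neutral) (use assms in auto)
  then show ?thesis by simp
qed

lemma enn_cmult_div:
  fixes f :: "_ \<Rightarrow> ennreal"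
  shows "c * (g * infsum f A / d) = infsum (\<lambda>s. c * (g * f s / d)) A"
proof -
  have "c * (g * infsum f A / d) = (c * g * inverse d) * infsum f A"
    by (simp add: divide_ennreal_def mult_ac)
  also have "\<dots> = infsum (\<lambda>s. (c * g * inverse d) * f s) A" by (rule enn_cmult)
  also have "\<dots> = infsum (\<lambda>s. c * (g * f s / d)) A" by (simp add: divide_ennreal_def mult_ac)
  finally show ?thesis .
qed



definition Wf :: "nat \<Rightarrow> (nat \<Rightarrow> nat list pmf) \<Rightarrow> nat list \<Rightarrow> ttree list \<Rightarrow> real" where
  "Wf K \<zeta> x ts = (\<Prod>l<length x. gw K \<zeta> (x ! l) (ts ! l))"

definition validf :: "nat \<Rightarrow> nat list \<Rightarrow> ttree list \<Rightarrow> bool" where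
  "validf K x ts \<longleftrightarrow> (\<forall>l<length x. is_tree K (ts ! l) \<and> (ts ! l) [] = Some (x ! l))"

definition Lf :: "nat \<Rightarrow> (nat \<Rightarrow> nat list pmf) \<Rightarrow> nat list \<Rightarrow> (nat list \<Rightarrow> ttree \<Rightarrow> ennreal)
   \<Rightarrow> (ttree \<Rightarrow> ennreal) \<Rightarrow> nat \<Rightarrow> ttree list \<Rightarrow> nat list \<Rightarrow> ennreal" where
  "Lf K \<zeta> x G1 G2 j ts u = (if validf K x ts \<and> u \<in> dom (ts ! (j - 1))
     then ennreal (Wf K \<zeta> x ts) * G1 (j # u) (forest_of (ts[j - 1 := prune (ts ! (j - 1)) u]))
          * G2 (fringe (ts ! (j - 1)) u) else 0)"

lemma Wf_zero: "\<not> validf K x ts \<Longrightarrow> Wf K \<zeta> x ts = 0"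
proof -
  assume "\<not> validf K x ts"
  then obtain l where l: "l < length x" "\<not> (is_tree K (ts ! l) \<and> (ts ! l) [] = Some (x ! l))"
    unfolding validf_def by blast
  have "gw K \<zeta> (x ! l) (ts ! l) = 0" by (rule gw_zero[OF l(2)])
  then show ?thesis unfolding Wf_def using l(1) by (intro prod_zero) auto
qed

lemma Wf_nonneg: "0 \<le> Wf K \<zeta> x ts"
  unfolding Wf_def by (intro prod_nonneg) (simp add: gw_nonneg)

lemma stepA:
  assumes len: "length ts = length x"
  shows "ennreal (\<Prod>l<length x. gw K \<zeta> (x ! l) (ts ! l))
      * (\<Sum>v\<in>dom (forest_of ts). G1 v (prune (forest_of ts) v) * G2 (fringe (forest_of ts) v))
    = (\<Sum>j\<in>{1..length x}. infsum (\<lambda>u. Lf K \<zeta> x G1 G2 j ts u) UNIV)"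
proof (cases "validf K x ts")
  case False
  have w0: "(\<Prod>l<length x. gw K \<zeta> (x ! l) (ts ! l)) = 0" using Wf_zero[OF False] unfolding Wf_def .
  have l0: "ennreal (\<Prod>l<length x. gw K \<zeta> (x ! l) (ts ! l))
      * (\<Sum>v\<in>dom (forest_of ts). G1 v (prune (forest_of ts) v) * G2 (fringe (forest_of ts) v)) = 0"
    by (simp only: w0 ennreal_0 mult_zero_left)
  have "Lf K \<zeta> x G1 G2 j ts u = 0" for j u using False by (simp add: Lf_def)
  then have r0: "(\<Sum>j\<in>{1..length x}. infsum (\<lambda>u. Lf K \<zeta> x G1 G2 j ts u) UNIV) = 0" by simp
  show ?thesis using l0 r0 by metis
next
  case True
  define H where "H v = G1 v (prune (forest_of ts) v) * G2 (fringe (forest_of ts) v)" for v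
  define S where "S = Sigma {1..length x} (\<lambda>j. dom (ts ! (j - 1)))"
  have fin: "finite (dom (ts ! (j - 1)))" if "j \<in> {1..length x}" for j
  proof -
    have "j - 1 < length x" using that by auto
    then show ?thesis using True unfolding validf_def is_tree_def by blast
  qed
  have inj: "inj_on (\<lambda>(j, u). j # u) S" by (auto simp: inj_on_def S_def)
  have "(\<Sum>v\<in>dom (forest_of ts). H v) = (\<Sum>z\<in>S. H ((\<lambda>(j, u). j # u) z))"
    unfolding forest_dom len S_def[symmetric] by (simp add: sum.reindex[OF inj])
  also have "\<dots> = (\<Sum>(j, u)\<in>S. H (j # u))" by (rule sum.cong) auto
  also have "\<dots> = (\<Sum>j\<in>{1..length x}. \<Sum>u\<in>dom (ts ! (j - 1)). H (j # u))"
    unfolding S_def by (rule sum.Sigma[symmetric]) (use fin in auto)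
  finally have eq1: "(\<Sum>v\<in>dom (forest_of ts). H v) = (\<Sum>j\<in>{1..length x}. \<Sum>u\<in>dom (ts ! (j - 1)). H (j # u))" .
  have eq2: "ennreal (Wf K \<zeta> x ts) * (\<Sum>u\<in>dom (ts ! (j - 1)). H (j # u)) = infsum (\<lambda>u. Lf K \<zeta> x G1 G2 j ts u) UNIV"
    if j: "j \<in> {1..length x}" for j
  proof -
    have "infsum (\<lambda>u. Lf K \<zeta> x G1 G2 j ts u) UNIV = infsum (\<lambda>u. Lf K \<zeta> x G1 G2 j ts u) (dom (ts ! (j - 1)))"
      by (rule infsum_cong_neutral) (auto simp: Lf_def)
    also have "\<dots> = (\<Sum>u\<in>dom (ts ! (j - 1)). Lf K \<zeta> x G1 G2 j ts u)" using fin[OF j] by simp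
    also have "\<dots> = (\<Sum>u\<in>dom (ts ! (j - 1)). ennreal (Wf K \<zeta> x ts) * H (j # u))"
    proof (rule sum.cong[OF refl])
      fix u assume u: "u \<in> dom (ts ! (j - 1))"
      have j1: "1 \<le> j" "j \<le> length ts" using j len by auto
      show "Lf K \<zeta> x G1 G2 j ts u = ennreal (Wf K \<zeta> x ts) * H (j # u)"
        using True u unfolding Lf_def H_def forest_prune[OF j1] forest_fringe[OF j1]
        by (simp add: mult.assoc)
    qed
    also have "\<dots> = ennreal (Wf K \<zeta> x ts) * (\<Sum>u\<in>dom (ts ! (j - 1)). H (j # u))"
      by (simp add: sum_distrib_left)
    finally show ?thesis by simp
  qed
  have "ennreal (Wf K \<zeta> x ts) * (\<Sum>v\<in>dom (forest_of ts). H v)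
      = (\<Sum>j\<in>{1..length x}. ennreal (Wf K \<zeta> x ts) * (\<Sum>u\<in>dom (ts ! (j - 1)). H (j # u)))"
    unfolding eq1 by (simp add: sum_distrib_left)
  also have "\<dots> = (\<Sum>j\<in>{1..length x}. infsum (\<lambda>u. Lf K \<zeta> x G1 G2 j ts u) UNIV)"
    by (rule sum.cong[OF refl]) (rule eq2)
  finally show ?thesis unfolding H_def Wf_def .
qed

lemma enn_alg:
  fixes G H :: ennreal
  assumes "bx > 0" "be > 0" "W \<ge> 0" "P1 \<ge> 0" "P2 \<ge> 0"
  shows "ennreal bx * ennreal (W * (be / bx * P1)) * (G * (ennreal P2 * H) / ennreal be)
       = ennreal (W * (P1 * P2)) * G * H"
proof -
  define Y where "Y = W * (be / bx * P1)"
  have Y: "Y \<ge> 0" using assms by (simp add: Y_def)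
  have "ennreal bx * ennreal Y * (G * (ennreal P2 * H) / ennreal be)
      = (ennreal bx * ennreal Y * ennreal P2 * ennreal (inverse be)) * G * H"
    using assms by (simp add: divide_ennreal_def inverse_ennreal mult_ac)
  also have "ennreal bx * ennreal Y * ennreal P2 * ennreal (inverse be) = ennreal (bx * Y * P2 * inverse be)"
    using assms Y by (simp add: ennreal_mult)
  also have "bx * Y * P2 * inverse be = W * (P1 * P2)"
    using assms unfolding Y_def by (simp add: field_simps)
  finally show ?thesis unfolding Y_def .
qed


lemma per_j:
  assumes bpos: "\<forall>k\<in>{1..K}. b k > 0" and xK: "set x \<subseteq> {1..K}" and j1: "1 \<le> j" and jr: "j \<le> length x"
  shows "infsum (\<lambda>(ts, u). Lf K \<zeta> x G1 G2 j ts u) ({ts. length ts = length x} \<times> UNIV)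
     = ennreal (b (x ! (j - 1))) * (\<Sum>h. E_hat K \<zeta> b x j h
          (\<lambda>V F. G1 V F * E_tree K \<zeta> (the (F V)) G2 / ennreal (b (the (F V)))))"
proof -
  define r where "r = length x"
  define J where "J = j - 1"
  have Jr: "J < r" using j1 jr by (simp add: J_def r_def)
  define T where "T = {ts::ttree list. length ts = r}"
  define xj where "xj = x ! J"
  have xjK: "xj \<in> {1..K}" using xK Jr nth_mem unfolding xj_def r_def by blast
  have bx: "b xj > 0" using bpos xjK by blast
  define Wm where "Wm ts = (\<Prod>l\<in>{..<r} - {J}. gw K \<zeta> (x ! l) (ts ! l))" for ts
  have Wm_nn: "0 \<le> Wm ts" for ts unfolding Wm_def by (intro prod_nonneg) (simp add: gw_nonneg)
  define Gf where "Gf = (\<lambda>V F. G1 V F * E_tree K \<zeta> (the (F V)) G2 / ennreal (b (the (F V))))"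
  define A where "A h = (\<lambda>(ts, v'). ennreal (Wm ts * sb_mass K \<zeta> b xj h (ts ! J) v') * Gf (j # v') (forest_of ts))" for h
  have Ehat: "E_hat K \<zeta> b x j h Gf = infsum (A h) (T \<times> UNIV)" for h
    unfolding E_hat_def A_def Wm_def T_def r_def J_def xj_def by simp
  define R where "R = (\<lambda>((ts::ttree list, v'::nat list), s::ttree).
      ennreal (b xj) * ennreal (Wm ts * sb_mass K \<zeta> b xj (length v') (ts ! J) v')
      * (G1 (j # v') (forest_of ts) * (ennreal (gw K \<zeta> (the ((ts ! J) v')) s) * G2 s) / ennreal (b (the ((ts ! J) v')))))"
  define Lc where "Lc = (\<lambda>(ts, u). Lf K \<zeta> x G1 G2 j ts u)"
  have step1: "(\<Sum>h. E_hat K \<zeta> b x j h Gf) = infsum (\<lambda>z. A (length (snd z)) z) (T \<times> UNIV)"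
  proof -
    have "(\<Sum>h. E_hat K \<zeta> b x j h Gf) = infsum (\<lambda>h. infsum (A h) (T \<times> UNIV)) UNIV"
      unfolding Ehat by (rule enn_suminf)
    also have "\<dots> = infsum (\<lambda>z. infsum (\<lambda>h. A h z) UNIV) (T \<times> UNIV)"
      by (rule enn_swap)
    also have "\<dots> = infsum (\<lambda>z. A (length (snd z)) z) (T \<times> UNIV)"
    proof (rule infsum_cong)
      fix z :: "ttree list \<times> nat list"
      obtain ts v' where z: "z = (ts, v')" by (cases z)
      have "A h z = 0" if "h \<noteq> length (snd z)" for h
        using that unfolding z A_def by (simp add: sb_zero)
      then show "infsum (\<lambda>h. A h z) UNIV = A (length (snd z)) z" by (rule enn_single)
    qed
    finally show ?thesis .
  qed
  have step3: "ennreal (b xj) * A (length (snd z)) z = infsum (\<lambda>s. R (z, s)) UNIV" if "z \<in> T \<times> UNIV" for z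
  proof -
    obtain ts v' where z: "z = (ts, v')" by (cases z)
    have len: "length ts = length x" using that z T_def r_def by simp
    have fv: "forest_of ts (j # v') = (ts ! J) v'" using j1 jr len by (simp add: forest_Cons J_def)
    have "ennreal (b xj) * A (length (snd z)) z
      = (ennreal (b xj) * ennreal (Wm ts * sb_mass K \<zeta> b xj (length v') (ts ! J) v'))
         * (G1 (j # v') (forest_of ts) * infsum (\<lambda>s. ennreal (gw K \<zeta> (the ((ts ! J) v')) s) * G2 s) UNIV
            / ennreal (b (the ((ts ! J) v'))))"
      unfolding z A_def Gf_def E_tree_def by (simp add: mult.assoc fv)
    also have "\<dots> = infsum (\<lambda>s. R (z, s)) UNIV"
      unfolding enn_cmult_div z R_def by (simp add: mult.assoc)
    finally show ?thesis .
  qed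
  define SR where "SR = {((ts, v'), s). length ts = r
      \<and> (\<forall>l<r. l \<noteq> J \<longrightarrow> is_tree K (ts ! l) \<and> (ts ! l) [] = Some (x ! l))
      \<and> is_tree K (ts ! J) \<and> (ts ! J) [] = Some xj \<and> v' \<in> dom (ts ! J) \<and> leafv (ts ! J) v'
      \<and> is_tree K s \<and> s [] = (ts ! J) v'}"
  define SL where "SL = {(ts, u). length ts = r \<and> validf K x ts \<and> u \<in> dom (ts ! J)}"
  define gm where "gm = (\<lambda>((ts::ttree list, v'::nat list), s::ttree). (ts[J := graft (ts ! J) v' s], v'))"
  define hm where "hm = (\<lambda>(ts::ttree list, u::nat list). ((ts[J := prune (ts ! J) u], u), fringe (ts ! J) u))"
  have R0: "R z = 0" if "z \<in> (T \<times> UNIV) \<times> UNIV - SR" for z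
  proof -
    obtain ts v' s where z: "z = ((ts, v'), s)" by (metis prod.collapse)
    have len: "length ts = r" using that z T_def by simp
    show ?thesis
    proof (cases "\<forall>l<r. l \<noteq> J \<longrightarrow> is_tree K (ts ! l) \<and> (ts ! l) [] = Some (x ! l)")
      case False
      then obtain l where l: "l < r" "l \<noteq> J" "\<not> (is_tree K (ts ! l) \<and> (ts ! l) [] = Some (x ! l))" by blast
      have "gw K \<zeta> (x ! l) (ts ! l) = 0" by (rule gw_zero[OF l(3)])
      then have "Wm ts = 0" unfolding Wm_def using l by (intro prod_zero) auto
      then show ?thesis unfolding z R_def by simp
    next
      case True
      show ?thesis
      proof (cases "is_tree K (ts ! J) \<and> (ts ! J) [] = Some xj \<and> v' \<in> dom (ts ! J) \<and> leafv (ts ! J) v'")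
        case False
        then have "sb_mass K \<zeta> b xj (length v') (ts ! J) v' = 0" by (intro sb_zero) auto
        then show ?thesis unfolding z R_def by simp
      next
        case True2: True
        then obtain e where e: "(ts ! J) v' = Some e" by blast
        have "\<not> (is_tree K s \<and> s [] = (ts ! J) v')" using that z len True True2 unfolding SR_def by auto
        then have "gw K \<zeta> e s = 0" using e by (intro gw_zero) auto
        then show ?thesis unfolding z R_def using e by simp
      qed
    qed
  qed
  have L0: "Lc w = 0" if "w \<in> T \<times> UNIV - SL" for w
  proof -
    obtain ts u where w: "w = (ts, u)" by (cases w)
    show ?thesis using that unfolding w Lc_def SL_def T_def J_def by (auto simp: Lf_def)
  qed
  have SRsub: "SR \<subseteq> (T \<times> UNIV) \<times> UNIV" unfolding SR_def T_def by auto
  have SLsub: "SL \<subseteq> T \<times> UNIV" unfolding SL_def T_def by auto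
  have gmin: "gm z \<in> SL \<and> hm (gm z) = z \<and> Lc (gm z) = R z" if z: "z \<in> SR" for z
  proof -
    obtain ts v' s where zz: "z = ((ts, v'), s)" by (metis prod.collapse)
    define p where "p = ts ! J"
    have len: "length ts = r" and oth: "\<forall>l<r. l \<noteq> J \<longrightarrow> is_tree K (ts ! l) \<and> (ts ! l) [] = Some (x ! l)"
      and tp: "is_tree K p" and rp: "p [] = Some xj" and vp: "v' \<in> dom p" and lf: "leafv p v'"
      and ts: "is_tree K s" and rs: "s [] = p v'"
      using z unfolding zz SR_def p_def by auto
    interpret G: graftctx K p s v' using tp vp lf ts rs by unfold_locales
    define t' where "t' = graft p v' s"
    define ts' where "ts' = ts[J := t']"
    have gmz: "gm z = (ts', v')" unfolding zz gm_def ts'_def t'_def p_def by simp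
    have len': "length ts' = r" using len by (simp add: ts'_def)
    have tsJ: "ts' ! J = t'" using len Jr by (simp add: ts'_def)
    have tsl: "ts' ! l = ts ! l" if "l \<noteq> J" for l using that by (simp add: ts'_def)
    have tt: "is_tree K t'" unfolding t'_def by (rule G.graft_tree)
    have rt: "t' [] = Some xj" unfolding t'_def using G.graft_root rp by simp
    have valid: "validf K x ts'"
      unfolding validf_def
    proof (intro allI impI)
      fix l assume "l < length x"
      then have lr: "l < r" by (simp add: r_def)
      show "is_tree K (ts' ! l) \<and> (ts' ! l) [] = Some (x ! l)"
      proof (cases "l = J")
        case True then show ?thesis using tsJ tt rt xj_def by simp
      next
        case False then show ?thesis using tsl oth lr by simp
      qed
    qed
    have vt: "v' \<in> dom t'" unfolding t'_def G.dom_graft using G.sdom by auto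
    have bck: "ts'[J := prune (ts' ! J) v'] = ts"
    proof -
      have "prune (ts' ! J) v' = p" unfolding tsJ t'_def by (rule G.prune_graft)
      then have "ts'[J := prune (ts' ! J) v'] = ts'[J := p]" by simp
      also have "\<dots> = ts" unfolding ts'_def p_def by simp
      finally show ?thesis .
    qed
    have fr: "fringe (ts' ! J) v' = s" unfolding tsJ t'_def by (rule fringe_graft)
    have inSL: "gm z \<in> SL" unfolding gmz SL_def using len' valid vt tsJ by simp
    have "hm (ts', v') = ((ts, v'), s)" unfolding hm_def using bck fr by simp
    then have hmgm: "hm (gm z) = z" using gmz zz by simp
    define e where "e = the (p v')"
    have pe: "p v' = Some e" using vp e_def by auto
    have eK: "e \<in> {1..K}" using type_range[OF tp vp] e_def by simp
    have be: "b e > 0" using bpos eK by blast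
    have Wsplit: "Wf K \<zeta> x ts' = Wm ts * gw K \<zeta> xj t'"
    proof -
      have "Wf K \<zeta> x ts' = gw K \<zeta> (x ! J) (ts' ! J) * (\<Prod>l\<in>{..<r} - {J}. gw K \<zeta> (x ! l) (ts' ! l))"
        unfolding Wf_def r_def[symmetric] using Jr by (simp add: prod.remove)
      also have "(\<Prod>l\<in>{..<r} - {J}. gw K \<zeta> (x ! l) (ts' ! l)) = Wm ts"
        unfolding Wm_def by (rule prod.cong) (auto simp: tsl)
      finally show ?thesis using tsJ xj_def by simp
    qed
    have gwt: "gw K \<zeta> xj t' = PP \<zeta> p (dom p - {v'}) * PP \<zeta> s (dom s)"
      using gw_eq[OF tt rt] G.PP_graft unfolding t'_def by simp
    have sb: "sb_mass K \<zeta> b xj (length v') p v' = b e / b xj * PP \<zeta> p (dom p - {v'})"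
      using sb_formula[OF tp rp vp lf bpos] e_def by simp
    have gws: "gw K \<zeta> e s = PP \<zeta> s (dom s)" using gw_eq[OF ts] rs pe by simp
    have "Lc (gm z) = ennreal (Wf K \<zeta> x ts') * G1 (j # v') (forest_of ts) * G2 s"
      unfolding gmz Lc_def Lf_def J_def[symmetric] using valid vt tsJ bck fr by simp
    also have "\<dots> = ennreal (Wm ts * (PP \<zeta> p (dom p - {v'}) * PP \<zeta> s (dom s))) * G1 (j # v') (forest_of ts) * G2 s"
      unfolding Wsplit gwt ..
    also have "\<dots> = R z"
    proof -
      have "R z = ennreal (b xj) * ennreal (Wm ts * sb_mass K \<zeta> b xj (length v') p v')
          * (G1 (j # v') (forest_of ts) * (ennreal (gw K \<zeta> e s) * G2 s) / ennreal (b e))"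
        unfolding zz R_def p_def e_def by simp
      also have "\<dots> = ennreal (b xj) * ennreal (Wm ts * (b e / b xj * PP \<zeta> p (dom p - {v'})))
          * (G1 (j # v') (forest_of ts) * (ennreal (PP \<zeta> s (dom s)) * G2 s) / ennreal (b e))"
        unfolding sb gws ..
      also have "\<dots> = ennreal (Wm ts * (PP \<zeta> p (dom p - {v'}) * PP \<zeta> s (dom s))) * G1 (j # v') (forest_of ts) * G2 s"
        by (rule enn_alg[OF bx be Wm_nn PP_nonneg PP_nonneg])
      finally show ?thesis by simp
    qed
    finally show ?thesis using inSL hmgm by simp
  qed
  have hmin: "hm w \<in> SR \<and> gm (hm w) = w" if w: "w \<in> SL" for w
  proof -
    obtain ts u where ww: "w = (ts, u)" by (cases w)
    define t where "t = ts ! J"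
    have len: "length ts = r" and valid: "validf K x ts" and ut: "u \<in> dom t"
      using w unfolding ww SL_def t_def by auto
    have tt: "is_tree K t" and rt: "t [] = Some xj"
      using valid Jr unfolding validf_def t_def xj_def r_def by auto
    have oth: "\<forall>l<r. l \<noteq> J \<longrightarrow> is_tree K (ts ! l) \<and> (ts ! l) [] = Some (x ! l)"
      using valid unfolding validf_def r_def by auto
    define ts'' where "ts'' = ts[J := prune t u]"
    have hmw: "hm w = ((ts'', u), fringe t u)" unfolding ww hm_def ts''_def t_def by simp
    have tsJ: "ts'' ! J = prune t u" using len Jr by (simp add: ts''_def)
    have tsl: "ts'' ! l = ts ! l" if "l \<noteq> J" for l using that by (simp add: ts''_def)
    note P = prune_tree[OF tt ut]
    note F = fringe_tree[OF tt ut]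
    have "hm w \<in> SR"
      unfolding hmw SR_def using len oth tsl tsJ P F rt by (simp add: ts''_def)
    moreover have "gm (hm w) = w"
    proof -
      have "gm ((ts'', u), fringe t u) = (ts''[J := graft (ts'' ! J) u (fringe t u)], u)"
        unfolding gm_def by simp
      also have "\<dots> = (ts''[J := t], u)" using tsJ graft_prune_fringe by simp
      also have "\<dots> = (ts, u)" unfolding ts''_def t_def by simp
      finally show ?thesis using hmw ww by simp
    qed
    ultimately show ?thesis by simp
  qed
  have bij: "bij_betw gm SR SL"
    by (rule bij_betw_byWitness[where f'=hm]) (use gmin hmin in auto)
  have step5: "infsum R ((T \<times> UNIV) \<times> UNIV) = infsum Lc (T \<times> UNIV)"
  proof -
    have "infsum R ((T \<times> UNIV) \<times> UNIV) = infsum R SR"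
      by (rule infsum_cong_neutral) (use R0 SRsub in auto)
    also have "\<dots> = infsum (\<lambda>z. Lc (gm z)) SR"
      by (rule infsum_cong) (use gmin in auto)
    also have "\<dots> = infsum Lc SL" by (rule infsum_reindex_bij_betw[OF bij])
    also have "\<dots> = infsum Lc (T \<times> UNIV)"
      by (rule infsum_cong_neutral) (use L0 SLsub in auto)
    finally show ?thesis .
  qed
  have "ennreal (b xj) * (\<Sum>h. E_hat K \<zeta> b x j h Gf)
      = infsum (\<lambda>z. ennreal (b xj) * A (length (snd z)) z) (T \<times> UNIV)"
    unfolding step1 by (rule enn_cmult)
  also have "\<dots> = infsum (\<lambda>z. infsum (\<lambda>s. R (z, s)) UNIV) (T \<times> UNIV)"
    by (rule infsum_cong) (rule step3)
  also have "\<dots> = infsum R ((T \<times> UNIV) \<times> UNIV)"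
    using enn_Sigma[of R "T \<times> UNIV" "\<lambda>_. UNIV"] by simp
  also have "\<dots> = infsum Lc (T \<times> UNIV)" by (rule step5)
  finally show ?thesis unfolding Lc_def T_def r_def Gf_def xj_def J_def by simp
qed


theorem lemma9:
  fixes K :: nat and \<zeta> :: "nat \<Rightarrow> nat list pmf" and a b :: "nat \<Rightarrow> real"
    and x :: "nat list" and G1 :: "nat list \<Rightarrow> ttree \<Rightarrow> ennreal" and G2 :: "ttree \<Rightarrow> ennreal"
  assumes "K \<ge> 1"
    and "\<forall>i\<in>{1..K}. set_pmf (\<zeta> i) \<subseteq> {w. set w \<subseteq> {1..K}}"
    and "hypH K \<zeta>"
    and "\<forall>i\<in>{1..K}. b i > 0"
    and "\<forall>i\<in>{1..K}. (\<Sum>j=1..K. mentry \<zeta> i j * b j) = b i"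
    and "\<forall>j\<in>{1..K}. (\<Sum>i=1..K. a i * mentry \<zeta> i j) = a j"
    and "(\<Sum>i=1..K. a i) = 1"
    and "(\<Sum>i=1..K. a i * b i) = 1"
    and "set x \<subseteq> {1..K}"
  shows "E_forest K \<zeta> x (\<lambda>F. \<Sum>v\<in>dom F. G1 v (prune F v) * G2 (fringe F v))
       = (\<Sum>j=1..length x. ennreal (b (x ! (j - 1)))
            * (\<Sum>h. E_hat K \<zeta> b x j h
                 (\<lambda>V F. G1 V F * E_tree K \<zeta> (the (F V)) G2 / ennreal (b (the (F V))))))"
proof -
  have bpos: "\<forall>k\<in>{1..K}. b k > 0" using assms(4) .
  have xK: "set x \<subseteq> {1..K}" using assms(9) .
  have "E_forest K \<zeta> x (\<lambda>F. \<Sum>v\<in>dom F. G1 v (prune F v) * G2 (fringe F v))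
      = infsum (\<lambda>ts. \<Sum>j\<in>{1..length x}. infsum (\<lambda>u. Lf K \<zeta> x G1 G2 j ts u) UNIV) {ts. length ts = length x}"
    unfolding E_forest_def by (rule infsum_cong) (simp add: stepA)
  also have "\<dots> = (\<Sum>j\<in>{1..length x}. infsum (\<lambda>ts. infsum (\<lambda>u. Lf K \<zeta> x G1 G2 j ts u) UNIV) {ts. length ts = length x})"
    by (rule enn_infsum_sum) simp
  also have "\<dots> = (\<Sum>j\<in>{1..length x}. infsum (\<lambda>(ts, u). Lf K \<zeta> x G1 G2 j ts u) ({ts. length ts = length x} \<times> UNIV))"
  proof (rule sum.cong[OF refl])
    fix j
    show "infsum (\<lambda>ts. infsum (\<lambda>u. Lf K \<zeta> x G1 G2 j ts u) UNIV) {ts. length ts = length x}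
        = infsum (\<lambda>(ts, u). Lf K \<zeta> x G1 G2 j ts u) ({ts. length ts = length x} \<times> UNIV)"
      using enn_Sigma[of "\<lambda>(ts, u). Lf K \<zeta> x G1 G2 j ts u" "{ts. length ts = length x}" "\<lambda>_. UNIV"] by simp
  qed
  also have "\<dots> = (\<Sum>j=1..length x. ennreal (b (x ! (j - 1)))
            * (\<Sum>h. E_hat K \<zeta> b x j h
                 (\<lambda>V F. G1 V F * E_tree K \<zeta> (the (F V)) G2 / ennreal (b (the (F V))))))"
  proof (rule sum.cong[OF refl])
    fix j assume "j \<in> {1..length x}"
    then show "infsum (\<lambda>(ts, u). Lf K \<zeta> x G1 G2 j ts u) ({ts. length ts = length x} \<times> UNIV)
      = ennreal (b (x ! (j - 1))) * (\<Sum>h. E_hat K \<zeta> b x j h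
                 (\<lambda>V F. G1 V F * E_tree K \<zeta> (the (F V)) G2 / ennreal (b (the (F V)))))"
      using per_j[OF bpos xK] by simp
  qed
  finally show ?thesis .
qed

end
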